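(* Let $M \ge 3$ and $K \ge 2$ be integers, let $P_{\text{r}} > 0$, and let $\beta_1,\dots,\beta_K > 0$. Let $\mathbf{G} = \mathbf{H}\mathbf{D}^{1/2} \in \mathbb{C}^{M\times K}$, where $\mathbf{H}$ has i.i.d. $\mathcal{CN}(0,1)$ entries and $\mathbf{D} = \mathrm{diag}(\beta_1,\dots,\beta_K)$, and let $\mathbf{g}_i$ denote the $i$-th column of $\mathbf{G}$. For an integer $a$ and a positive integer $t$, let $j(a,t)$ be the unique element of $\{1,\dots,K\}$ congruent to $a+t$ modulo $K$. For $k\in\{1,\dots,K\}$ and $t \in \{1,\dots,K-1\}$, let $\mathcal{V}_{k,t} = \{j(k-t,t), j(k-t+1,t), \dots, j(k,t)\}$ and define $$\mathtt{R}^{\mathrm{dl},(t)}_{k} = \mathbb{E}\left\{\log_2\left(1 + \frac{\frac{P_{\text{r}}}{M\sum_{i=1}^K \beta_i}\|\mathbf{g}_k\|^4}{\frac{P_{\text{r}}}{M\sum_{i=1}^K \beta_i}\sum_{i\in\{1,\dots,K\}:\, j(i,t)\notin\mathcal{V}_{k,t}} |\mathbf{g}_k^H\mathbf{g}_i|^2 + 1}\right)\right\},$$ the expectation being over $\mathbf{G}$. Then $$\mathtt{R}^{\mathrm{dl},(t)}_{k} \ \ge\ \log_2\left(1 + \frac{P_{\text{r}}(M-1)(M-2)\beta_k^2}{P_{\text{r}}(M-2)\beta_k\sum_{i\in\{1,\dots,K\}:\, j(i,t)\notin\mathcal{V}_{k,t}}\beta_i + M\sum_{i=1}^K\beta_i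}\right).$$
   Context: Model: a decode-and-forward multi-way relay with an $M$-antenna relay and $K$ single-antenna users using successive cancelation: in broadcast time-slot $t$ the relay sends $x_{j(k,t)}$ to user $k$, and user $k$ removes its own symbol and the symbols $x_{j(k,1)},\dots,x_{j(k,t-1)}$ decoded in earlier slots; $\mathtt{R}^{\mathrm{dl},(t)}_{k}$ is the resulting downlink spectral efficiency. $\beta_k$ are large-scale fading coefficients and $P_{\text{r}}$ is the normalized relay transmit power. *)

theory Defs
  imports "HOL-Probability.Probability"
begin

definition CN_std :: "complex measure" where
  "CN_std = density lborel (\<lambda>z. ennreal (exp (- (cmod z)\<^sup>2) / pi))"

definition H_dist :: "nat \<Rightarrow> nat \<Rightarrow> (nat \<times> nat \<Rightarrow> complex) measure" where
  "H_dist M K = PiM ({1..M} \<times> {1..K}) (\<lambda>_. CN_std)"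

definition gcol :: "(nat \<Rightarrow> real) \<Rightarrow> (nat \<times> nat \<Rightarrow> complex) \<Rightarrow> nat \<Rightarrow> nat \<Rightarrow> complex" where
  "gcol \<beta> H i m = H (m, i) * complex_of_real (sqrt (\<beta> i))"

definition gnorm2 :: "nat \<Rightarrow> (nat \<Rightarrow> real) \<Rightarrow> (nat \<times> nat \<Rightarrow> complex) \<Rightarrow> nat \<Rightarrow> real" where
  "gnorm2 M \<beta> H i = (\<Sum>m\<in>{1..M}. (cmod (gcol \<beta> H i m))\<^sup>2)"

definition ginner :: "nat \<Rightarrow> (nat \<Rightarrow> real) \<Rightarrow> (nat \<times> nat \<Rightarrow> complex) \<Rightarrow> nat \<Rightarrow> nat \<Rightarrow> complex" where
  "ginner M \<beta> H k i = (\<Sum>m\<in>{1..M}. cnj (gcol \<beta> H k m) * gcol \<beta> H i m)"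

definition jidx :: "nat \<Rightarrow> int \<Rightarrow> nat \<Rightarrow> int" where
  "jidx K a t = ((a + int t - 1) mod int K) + 1"

definition Vset :: "nat \<Rightarrow> nat \<Rightarrow> nat \<Rightarrow> int set" where
  "Vset K k t = {jidx K (int k - int t + int s) t | s. s \<le> t}"

definition interf :: "nat \<Rightarrow> nat \<Rightarrow> nat \<Rightarrow> nat set" where
  "interf K k t = {i \<in> {1..K}. jidx K (int i) t \<notin> Vset K k t}"

definition R_dl :: "nat \<Rightarrow> nat \<Rightarrow> real \<Rightarrow> (nat \<Rightarrow> real) \<Rightarrow> nat \<Rightarrow> nat \<Rightarrow> real" where
  "R_dl M K Pr \<beta> k t =
     (let \<rho> = Pr / (real M * (\<Sum>i\<in>{1..K}. \<beta> i)) in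
      \<integral>H. log 2 (1 + \<rho> * (gnorm2 M \<beta> H k)\<^sup>2 /
               (\<rho> * (\<Sum>i\<in>interf K k t. (cmod (ginner M \<beta> H k i))\<^sup>2) + 1)) \<partial>(H_dist M K))"

end

theory Submission
  imports Defs
begin

lemma gauss1:
  fixes c :: real assumes c: "c > 0"
  shows "(\<integral>\<^sup>+x. ennreal (exp (- c * x\<^sup>2)) \<partial>lborel) = ennreal (sqrt (pi / c))"
proof -
  define \<sigma> where "\<sigma> = sqrt (1 / (2 * c))"
  have s2: "\<sigma>\<^sup>2 = 1 / (2 * c)" using c by (simp add: \<sigma>_def)
  have eq: "exp (- c * x\<^sup>2) = sqrt (pi / c) * normal_density 0 \<sigma> x" for x
    unfolding normal_density_def s2 using c by (simp add: field_simps real_sqrt_divide real_sqrt_mult)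
  have "(\<integral>\<^sup>+x. ennreal (exp (- c * x\<^sup>2)) \<partial>lborel) = (\<integral>\<^sup>+x. ennreal (sqrt (pi / c) * normal_density 0 \<sigma> x) \<partial>lborel)"
    by (simp only: eq)
  also have "\<dots> = ennreal (\<integral>x. sqrt (pi / c) * normal_density 0 \<sigma> x \<partial>lborel)"
    using c by (intro nn_integral_eq_integral integrable_mult_right integrable_normal_density AE_I2) (simp_all add: \<sigma>_def)
  also have "\<dots> = ennreal (sqrt (pi / c))" using c by (simp add: \<sigma>_def)
  finally show ?thesis .
qed

lemma gauss2:
  shows "(\<integral>\<^sup>+x. ennreal (x\<^sup>2 * exp (- x\<^sup>2)) \<partial>lborel) = ennreal (sqrt pi / 2)"
proof -
  define \<sigma> where "\<sigma> = sqrt (1 / 2)"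
  have s2: "\<sigma>\<^sup>2 = 1 / 2" by (simp add: \<sigma>_def)
  have eq: "x\<^sup>2 * exp (- x\<^sup>2) = sqrt pi * (normal_density 0 \<sigma> x * (x - 0) ^ (2 * 1))" for x
    unfolding normal_density_def s2 by (simp add: field_simps real_sqrt_divide real_sqrt_mult power2_eq_square)
  have hb0: "has_bochner_integral lborel (\<lambda>x. normal_density 0 \<sigma> x * (x - 0) ^ (2 * 1)) (fact (2*1) / ((2/\<sigma>\<^sup>2)^1 * fact 1))"
    by (rule normal_moment_even) (simp add: \<sigma>_def)
  have v: "fact (2*1) / ((2/\<sigma>\<^sup>2)^1 * fact 1) = (1/2::real)" by (simp add: s2)
  have hb: "has_bochner_integral lborel (\<lambda>x. normal_density 0 \<sigma> x * (x - 0) ^ (2 * 1)) (1/2)"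
    using hb0 unfolding v .
  have "(\<integral>\<^sup>+x. ennreal (x\<^sup>2 * exp (- x\<^sup>2)) \<partial>lborel) = (\<integral>\<^sup>+x. ennreal (sqrt pi * (normal_density 0 \<sigma> x * (x - 0) ^ (2 * 1))) \<partial>lborel)"
    by (simp only: eq)
  also have "\<dots> = ennreal (\<integral>x. sqrt pi * (normal_density 0 \<sigma> x * (x - 0) ^ (2 * 1)) \<partial>lborel)"
    using hb by (intro nn_integral_eq_integral) (auto intro!: integrable_mult_right simp: has_bochner_integral_iff)
  also have "\<dots> = ennreal (sqrt pi / 2)"
    using hb by (simp add: has_bochner_integral_iff)
  finally show ?thesis .
qed

lemma cmod_sq_inner: "(cmod z)\<^sup>2 = (z \<bullet> 1)\<^sup>2 + (z \<bullet> \<i>)\<^sup>2"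
  by (simp add: inner_complex_def cmod_power2)

lemma cgauss1:
  fixes c :: real assumes c: "c > 0"
  shows "(\<integral>\<^sup>+z. ennreal (exp (- c * (cmod z)\<^sup>2)) \<partial>(lborel::complex measure)) = ennreal (pi / c)"
proof -
  have "(\<integral>\<^sup>+z. ennreal (exp (- c * (cmod z)\<^sup>2)) \<partial>(lborel::complex measure))
     = (\<integral>\<^sup>+z. (\<Prod>b\<in>Basis. (\<lambda>b x. ennreal (exp (- c * x\<^sup>2))) b (z \<bullet> b)) \<partial>(lborel::complex measure))"
  proof -
    have "exp (- c * (cmod z)\<^sup>2) = exp (- c * (z \<bullet> 1)\<^sup>2) * exp (- c * (z \<bullet> \<i>)\<^sup>2)" for z
      by (simp add: cmod_sq_inner algebra_simps exp_add[symmetric])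
    then show ?thesis
      by (simp add: Basis_complex_def ennreal_mult)
  qed
  also have "\<dots> = (\<Prod>b\<in>(Basis::complex set). (\<integral>\<^sup>+x. ennreal (exp (- c * x\<^sup>2)) \<partial>lborel))"
    by (rule nn_integral_lborel_prod) auto
  also have "\<dots> = ennreal (sqrt (pi / c)) * ennreal (sqrt (pi / c))"
    using gauss1[OF c] by (simp add: Basis_complex_def)
  also have "\<dots> = ennreal (pi / c)"
    using c by (simp add: ennreal_mult[symmetric])
  finally show ?thesis .
qed

lemma cgauss2:
  shows "(\<integral>\<^sup>+z. ennreal ((cmod z)\<^sup>2 * exp (- (cmod z)\<^sup>2)) \<partial>(lborel::complex measure)) = ennreal pi"
proof -
  let ?f1 = "\<lambda>b x. ennreal (exp (- x\<^sup>2) * (if b = 1 then x\<^sup>2 else 1))"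
  let ?f2 = "\<lambda>b x. ennreal (exp (- x\<^sup>2) * (if b = \<i> then x\<^sup>2 else 1))"
  have "(\<integral>\<^sup>+z. ennreal ((cmod z)\<^sup>2 * exp (- (cmod z)\<^sup>2)) \<partial>(lborel::complex measure))
     = (\<integral>\<^sup>+z. (\<Prod>b\<in>Basis. ?f1 b (z \<bullet> b)) + (\<Prod>b\<in>Basis. ?f2 b (z \<bullet> b)) \<partial>(lborel::complex measure))"
    by (intro nn_integral_cong)
       (simp add: Basis_complex_def cmod_sq_inner algebra_simps exp_add[symmetric] exp_diff add_divide_distrib ennreal_mult[symmetric] ennreal_plus[symmetric] del: ennreal_plus)
  also have "\<dots> = (\<integral>\<^sup>+z. (\<Prod>b\<in>Basis. ?f1 b (z \<bullet> b)) \<partial>(lborel::complex measure)) + (\<integral>\<^sup>+z. (\<Prod>b\<in>Basis. ?f2 b (z \<bullet> b)) \<partial>(lborel::complex measure))"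
    by (rule nn_integral_add) auto
  also have "\<dots> = (\<Prod>b\<in>(Basis::complex set). (\<integral>\<^sup>+x. ?f1 b x \<partial>lborel)) + (\<Prod>b\<in>(Basis::complex set). (\<integral>\<^sup>+x. ?f2 b x \<partial>lborel))"
  proof -
    have h1: "(\<integral>\<^sup>+z. (\<Prod>b\<in>Basis. ?f1 b (z \<bullet> b)) \<partial>(lborel::complex measure)) = (\<Prod>b\<in>(Basis::complex set). (\<integral>\<^sup>+x. ?f1 b x \<partial>lborel))"
      by (rule nn_integral_lborel_prod) auto
    have h2: "(\<integral>\<^sup>+z. (\<Prod>b\<in>Basis. ?f2 b (z \<bullet> b)) \<partial>(lborel::complex measure)) = (\<Prod>b\<in>(Basis::complex set). (\<integral>\<^sup>+x. ?f2 b x \<partial>lborel))"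
      by (rule nn_integral_lborel_prod) auto
    show ?thesis by (simp only: h1 h2)
  qed
  also have "\<dots> = ennreal pi"
    using gauss1[of 1] gauss2
    by (simp add: Basis_complex_def ennreal_mult[symmetric] ennreal_plus[symmetric] mult.commute del: ennreal_plus)
  finally show ?thesis .
qed

lemma cn_nn:
  assumes [measurable]: "f \<in> borel_measurable borel"
  shows "(\<integral>\<^sup>+z. f z \<partial>CN_std) = (\<integral>\<^sup>+z. ennreal (exp (- (cmod z)\<^sup>2) / pi) * f z \<partial>lborel)"
  unfolding CN_std_def by (rule nn_integral_density) auto

lemma sets_CN[simp, measurable_cong]: "sets CN_std = sets borel"
  by (simp add: CN_std_def)

lemma space_CN[simp]: "space CN_std = UNIV"
  by (simp add: CN_std_def)

lemma cn_exp:
  assumes s: "s \<ge> 0"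
  shows "(\<integral>\<^sup>+z. ennreal (exp (- s * (cmod z)\<^sup>2)) \<partial>CN_std) = ennreal (1 / (1 + s))"
proof -
  have "(\<integral>\<^sup>+z. ennreal (exp (- s * (cmod z)\<^sup>2)) \<partial>CN_std)
     = (\<integral>\<^sup>+z. ennreal (exp (- (1 + s) * (cmod z)\<^sup>2)) * ennreal (1 / pi) \<partial>lborel)"
    by (subst cn_nn) (auto intro!: nn_integral_cong simp: ennreal_mult[symmetric] algebra_simps exp_add[symmetric])
  also have "\<dots> = ennreal (pi / (1 + s)) * ennreal (1 / pi)"
  proof -
    have eq: "(\<integral>\<^sup>+z. ennreal (exp (- (1 + s) * (cmod z)\<^sup>2)) \<partial>(lborel::complex measure)) = ennreal (pi / (1 + s))"
      using s by (intro cgauss1) simp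
    show ?thesis using eq by (simp add: nn_integral_multc)
  qed
  also have "\<dots> = ennreal (1 / (1 + s))"
    using s by (simp add: ennreal_mult[symmetric])
  finally show ?thesis .
qed

lemma prob_space_CN: "prob_space CN_std"
proof
  have "(\<integral>\<^sup>+z. ennreal (exp (- 0 * (cmod z)\<^sup>2)) \<partial>CN_std) = 1" using cn_exp[of 0] by simp
  then show "emeasure CN_std (space CN_std) = 1" by simp
qed

lemma emeasure_CN_UNIV[simp]: "emeasure CN_std UNIV = 1"
  using prob_space.emeasure_space_1[OF prob_space_CN] by simp

lemma cn_sq: "(\<integral>\<^sup>+z. ennreal ((cmod z)\<^sup>2) \<partial>CN_std) = 1"
proof -
  have "(\<integral>\<^sup>+z. ennreal ((cmod z)\<^sup>2) \<partial>CN_std)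
     = (\<integral>\<^sup>+z. ennreal ((cmod z)\<^sup>2 * exp (- (cmod z)\<^sup>2)) * ennreal (1 / pi) \<partial>lborel)"
    by (subst cn_nn) (auto intro!: nn_integral_cong simp: ennreal_mult[symmetric] algebra_simps)
  also have "\<dots> = ennreal pi * ennreal (1 / pi)"
    by (subst nn_integral_multc) (auto simp: cgauss2)
  also have "\<dots> = 1"
    by (simp add: ennreal_mult[symmetric])
  finally show ?thesis .
qed

lemma lborel_uminus: "(lborel::complex measure) = distr lborel borel uminus"
proof -
  show ?thesis using lborel_affine[of "-1" "0::complex"] by (simp add: density_1)
qed

lemma cn_sym:
  assumes [measurable]: "f \<in> borel_measurable borel"
  shows "(\<integral>\<^sup>+z. f (- z) \<partial>CN_std) = (\<integral>\<^sup>+z. f z \<partial>CN_std)"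
proof -
  let ?d = "\<lambda>z. ennreal (exp (- (cmod z)\<^sup>2) / pi)"
  have "(\<integral>\<^sup>+z. f z \<partial>CN_std) = (\<integral>\<^sup>+z. ?d z * f z \<partial>lborel)" by (rule cn_nn) simp
  also have "\<dots> = (\<integral>\<^sup>+z. ?d z * f z \<partial>(distr lborel borel uminus))"
    by (subst lborel_uminus[symmetric]) (rule refl)
  also have "\<dots> = (\<integral>\<^sup>+z. ?d (- z) * f (- z) \<partial>lborel)"
    by (rule nn_integral_distr) auto
  also have "\<dots> = (\<integral>\<^sup>+z. f (- z) \<partial>CN_std)"
    by (subst cn_nn) auto
  finally show ?thesis ..
qed

lemma cmod_parallelogram: "(cmod (a + b))\<^sup>2 + (cmod (a - b))\<^sup>2 = 2 * (cmod a)\<^sup>2 + 2 * (cmod b)\<^sup>2"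
  by (simp only: cmod_power2) (simp add: algebra_simps power2_eq_square)

lemma cn_lin:
  "(\<integral>\<^sup>+z. ennreal ((cmod (c * z + v))\<^sup>2) \<partial>CN_std) = ennreal ((cmod c)\<^sup>2 + (cmod v)\<^sup>2)"
proof -
  interpret prob_space CN_std by (rule prob_space_CN)
  let ?X = "\<integral>\<^sup>+z. ennreal ((cmod (c * z + v))\<^sup>2) \<partial>CN_std"
  have sym: "?X = (\<integral>\<^sup>+z. ennreal ((cmod (c * (- z) + v))\<^sup>2) \<partial>CN_std)"
    by (rule cn_sym[symmetric, where f="\<lambda>z. ennreal ((cmod (c * z + v))\<^sup>2)"]) simp
  have "?X + ?X = (\<integral>\<^sup>+z. ennreal ((cmod (c * z + v))\<^sup>2) + ennreal ((cmod (c * (- z) + v))\<^sup>2) \<partial>CN_std)"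
    by (subst sym, subst nn_integral_add) auto
  also have "\<dots> = (\<integral>\<^sup>+z. ennreal (2 * (cmod c)\<^sup>2) * ennreal ((cmod z)\<^sup>2) + ennreal (2 * (cmod v)\<^sup>2) \<partial>CN_std)"
  proof (rule nn_integral_cong)
    fix z
    have "(cmod (c * z + v))\<^sup>2 + (cmod (c * (- z) + v))\<^sup>2 = 2 * (cmod c)\<^sup>2 * (cmod z)\<^sup>2 + 2 * (cmod v)\<^sup>2"
      using cmod_parallelogram[of v "c * z"] by (simp add: norm_mult power_mult_distrib algebra_simps)
    then show "ennreal ((cmod (c * z + v))\<^sup>2) + ennreal ((cmod (c * (- z) + v))\<^sup>2) = ennreal (2 * (cmod c)\<^sup>2) * ennreal ((cmod z)\<^sup>2) + ennreal (2 * (cmod v)\<^sup>2)"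
      by (simp add: ennreal_mult[symmetric] ennreal_plus[symmetric] del: ennreal_plus)
  qed
  also have "\<dots> = ennreal (2 * (cmod c)\<^sup>2) * 1 + ennreal (2 * (cmod v)\<^sup>2) * 1"
    by (subst nn_integral_add) (auto simp: nn_integral_cmult cn_sq emeasure_space_1)
  also have "\<dots> = ennreal 2 * ennreal ((cmod c)\<^sup>2 + (cmod v)\<^sup>2)"
  proof -
    have "ennreal (2 * (cmod c)\<^sup>2) * 1 + ennreal (2 * (cmod v)\<^sup>2) * 1 = ennreal (2 * ((cmod c)\<^sup>2 + (cmod v)\<^sup>2))"
      by (simp add: ennreal_plus[symmetric] algebra_simps del: ennreal_plus)
    also have "\<dots> = ennreal 2 * ennreal ((cmod c)\<^sup>2 + (cmod v)\<^sup>2)"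
      by (rule ennreal_mult) auto
    finally show ?thesis .
  qed
  finally have "ennreal 2 * ?X = ennreal 2 * ennreal ((cmod c)\<^sup>2 + (cmod v)\<^sup>2)"
    by (simp add: mult_2[symmetric] ennreal_numeral)
  then show ?thesis by (subst (asm) ennreal_mult_cancel_left) simp
qed

lemma psf_CN: "product_sigma_finite (\<lambda>_::'i. CN_std)"
  unfolding product_sigma_finite_def by (auto intro: prob_space_imp_sigma_finite prob_space_CN)

lemma prob_PiCN: "prob_space (PiM J (\<lambda>_::'i. CN_std))"
  by (rule prob_space_PiM) (rule prob_space_CN)

lemma emeasure_PiCN[simp]: "emeasure (PiM J (\<lambda>_::'i. CN_std)) (space (PiM J (\<lambda>_::'i. CN_std))) = 1"
  using prob_space.emeasure_space_1[OF prob_PiCN] .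

lemma comp_meas:
  assumes "m \<in> J"
  shows "(\<lambda>y. y m) \<in> borel_measurable (PiM J (\<lambda>_::'i. CN_std))"
proof -
  have "(\<lambda>y. y m) \<in> measurable (PiM J (\<lambda>_::'i. CN_std)) CN_std"
    using assms by (rule measurable_component_singleton)
  moreover have "measurable (PiM J (\<lambda>_::'i. CN_std)) CN_std = borel_measurable (PiM J (\<lambda>_::'i. CN_std))"
    by (rule measurable_cong_sets) auto
  ultimately show ?thesis by simp
qed

lemma sum_meas:
  assumes "S \<subseteq> J"
  shows "(\<lambda>y. \<Sum>m\<in>S. c m * y m) \<in> borel_measurable (PiM J (\<lambda>_::'i. CN_std))"
  using assms by (intro borel_measurable_sum borel_measurable_times borel_measurable_const comp_meas) auto

lemma pn_lin:
  fixes c :: "'i \<Rightarrow> complex"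
  assumes "finite J" "S \<subseteq> J"
  shows "(\<integral>\<^sup>+y. ennreal ((cmod (\<Sum>m\<in>S. c m * y m))\<^sup>2) \<partial>PiM J (\<lambda>_. CN_std)) = ennreal (\<Sum>m\<in>S. (cmod (c m))\<^sup>2)"
  using assms
proof (induction J arbitrary: S rule: finite_induct)
  case empty
  then show ?case by simp
next
  case (insert p J)
  interpret product_sigma_finite "\<lambda>_::'i. CN_std" by (rule psf_CN)
  have meas: "(\<lambda>y. ennreal ((cmod (\<Sum>m\<in>S. c m * y m))\<^sup>2)) \<in> borel_measurable (PiM (insert p J) (\<lambda>_. CN_std))"
    using sum_meas[OF insert.prems, of c] by measurable
  have "(\<integral>\<^sup>+y. ennreal ((cmod (\<Sum>m\<in>S. c m * y m))\<^sup>2) \<partial>PiM (insert p J) (\<lambda>_. CN_std))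
     = (\<integral>\<^sup>+x. (\<integral>\<^sup>+y. ennreal ((cmod (\<Sum>m\<in>S. c m * (x(p := y)) m))\<^sup>2) \<partial>CN_std) \<partial>PiM J (\<lambda>_. CN_std))"
    by (rule product_nn_integral_insert[OF insert.hyps(1,2) meas])
  also have "\<dots> = ennreal (\<Sum>m\<in>S. (cmod (c m))\<^sup>2)"
  proof (cases "p \<in> S")
    case True
    have SJ: "S - {p} \<subseteq> J" using insert.prems by auto
    have eq: "(\<Sum>m\<in>S. c m * (x(p := y)) m) = c p * y + (\<Sum>m\<in>S - {p}. c m * x m)" for x y
    proof -
      have "(\<Sum>m\<in>S. c m * (x(p := y)) m) = c p * (x(p := y)) p + (\<Sum>m\<in>S - {p}. c m * (x(p := y)) m)"
        using True insert.prems insert.hyps by (subst sum.remove[of S p]) (auto intro: finite_subset)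
      also have "(\<Sum>m\<in>S - {p}. c m * (x(p := y)) m) = (\<Sum>m\<in>S - {p}. c m * x m)"
        by (intro sum.cong) auto
      finally show ?thesis by simp
    qed
    have "(\<integral>\<^sup>+x. (\<integral>\<^sup>+y. ennreal ((cmod (\<Sum>m\<in>S. c m * (x(p := y)) m))\<^sup>2) \<partial>CN_std) \<partial>PiM J (\<lambda>_. CN_std))
        = (\<integral>\<^sup>+x. ennreal ((cmod (c p))\<^sup>2) + ennreal ((cmod (\<Sum>m\<in>S - {p}. c m * x m))\<^sup>2) \<partial>PiM J (\<lambda>_. CN_std))"
      by (intro nn_integral_cong) (simp only: eq cn_lin, simp)
    also have "\<dots> = ennreal ((cmod (c p))\<^sup>2) + ennreal (\<Sum>m\<in>S - {p}. (cmod (c m))\<^sup>2)"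
      using sum_meas[OF SJ, of c] by (subst nn_integral_add) (auto simp: insert.IH[OF SJ])
    also have "\<dots> = ennreal (\<Sum>m\<in>S. (cmod (c m))\<^sup>2)"
    proof -
      have fS: "finite S" using insert.prems insert.hyps by (auto intro: finite_subset)
      have "(\<Sum>m\<in>S. (cmod (c m))\<^sup>2) = (cmod (c p))\<^sup>2 + (\<Sum>m\<in>S - {p}. (cmod (c m))\<^sup>2)"
        using fS True by (rule sum.remove)
      then show ?thesis by (simp add: ennreal_plus sum_nonneg)
    qed
    finally show ?thesis .
  next
    case False
    have SJ: "S \<subseteq> J" using insert.prems False by auto
    have eq: "(\<Sum>m\<in>S. c m * (x(p := y)) m) = (\<Sum>m\<in>S. c m * x m)" for x y
      using False by (intro sum.cong) auto
    show ?thesis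
      by (simp only: eq) (simp add: insert.IH[OF SJ])
  qed
  finally show ?case .
qed

definition L1 :: "real \<Rightarrow> ennreal" where
  "L1 a = (\<integral>\<^sup>+s. ennreal (exp (- s * a)) * indicator {0..} s \<partial>lborel)"
definition L2 :: "real \<Rightarrow> ennreal" where
  "L2 a = (\<integral>\<^sup>+s. ennreal (s * exp (- s * a)) * indicator {0..} s \<partial>lborel)"

lemma L1_pos: assumes a: "a > 0" shows "L1 a = ennreal (1 / a)"
proof -
  have "L1 a = ennreal (0 - (- exp (- 0 * a) / a))"
    unfolding L1_def
  proof (rule nn_integral_FTC_atLeast)
    show "((\<lambda>s. - exp (- s * a) / a) \<longlongrightarrow> 0) at_top" using a by real_asymp
  qed (use a in \<open>auto intro!: derivative_eq_intros simp: field_simps\<close>)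
  then show ?thesis by simp
qed

lemma L2_pos: assumes a: "a > 0" shows "L2 a = ennreal (1 / a\<^sup>2)"
proof -
  have "L2 a = ennreal (0 - (- (0 / a + 1 / a\<^sup>2) * exp (- 0 * a)))"
    unfolding L2_def
  proof (rule nn_integral_FTC_atLeast)
    show "((\<lambda>s. - (s / a + 1 / a\<^sup>2) * exp (- s * a)) \<longlongrightarrow> 0) at_top" using a by real_asymp
  qed (use a in \<open>auto intro!: derivative_eq_intros simp: field_simps power2_eq_square\<close>)
  then show ?thesis by simp
qed

lemma L1_zero: "L1 0 = \<infinity>"
proof -
  have "L1 0 = emeasure lborel {0::real..}"
    unfolding L1_def by (simp add: nn_integral_indicator[symmetric] del: nn_integral_indicator)
  also have "\<dots> = \<infinity>"
  proof -
    have "of_nat n \<le> emeasure lborel {0::real..}" for n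
    proof -
      have "of_nat n = emeasure lborel {0::real..real n}" by (simp add: ennreal_of_nat_eq_real_of_nat)
      also have "\<dots> \<le> emeasure lborel {0::real..}" by (rule emeasure_mono) auto
      finally show ?thesis .
    qed
    then have "(SUP n. of_nat n :: ennreal) \<le> emeasure lborel {0::real..}" by (rule SUP_least)
    then show ?thesis by (simp add: ennreal_SUP_of_nat_eq_top top_unique)
  qed
  finally show ?thesis .
qed

lemma L_nonneg_le: "a \<ge> 0 \<Longrightarrow> ennreal a * L2 a \<le> L1 a"
proof (cases "a = 0")
  case True then show ?thesis by simp
next
  case False
  assume "a \<ge> 0" then have a: "a > 0" using False by simp
  then show ?thesis by (simp add: L1_pos L2_pos ennreal_mult[symmetric] power2_eq_square)
qed

lemma inv_pow_tendsto: assumes "n \<ge> 1" shows "((\<lambda>s::real. 1 / (1 + s) ^ n) \<longlongrightarrow> 0) at_top"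
proof -
  have "filterlim (\<lambda>s::real. 1 + s) at_top at_top" by real_asymp
  then have "filterlim (\<lambda>s::real. (1 + s) ^ n) at_top at_top"
    using assms by (intro filterlim_pow_at_top) auto
  then show ?thesis
    by (intro tendsto_divide_0[OF tendsto_const] filterlim_at_top_imp_at_infinity)
qed

lemma dinv:
  fixes n :: nat assumes n: "n \<ge> 1" and x: "x \<ge> (0::real)"
  shows "DERIV (\<lambda>s. 1 / (1 + s) ^ n) x :> - real n * (1 / (1 + x) ^ (n + 1))"
proof -
  have "DERIV (\<lambda>s. 1 / (1 + s) ^ n) x :> - (real n * (1 + x) ^ (n - 1)) / ((1 + x) ^ n)\<^sup>2"
    using x by (auto intro!: derivative_eq_intros simp: power2_eq_square)
  moreover have "- (real n * (1 + x) ^ (n - 1)) / ((1 + x) ^ n)\<^sup>2 = - real n * (1 / (1 + x) ^ (n + 1))"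
  proof -
    have ee: "(n - 1) + (n + 1) = n + n" using n by simp
    have e2: "((1 + x) ^ n)\<^sup>2 = (1 + x) ^ (n - 1) * (1 + x) ^ (n + 1)"
      by (simp only: power_add[symmetric] ee power2_eq_square)
    have pos: "(1 + x) ^ (n - 1) > 0" "(1 + x) ^ (n + 1) > 0" using x by auto
    have gen: "\<And>P Q c::real. P > 0 \<Longrightarrow> Q > 0 \<Longrightarrow> - (c * P) / (P * Q) = - c * (1 / Q)"
      by (simp add: field_simps)
    show ?thesis unfolding e2 using gen[OF pos] .
  qed
  ultimately show ?thesis by simp
qed

lemma s_int1:
  fixes M :: nat assumes M: "M \<ge> 2"
  shows "(\<integral>\<^sup>+s. ennreal (1 / (1 + s) ^ M) * indicator {0..} s \<partial>lborel) = ennreal (1 / (real M - 1))"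
proof -
  define F where "F s = - (1 / (real M - 1)) * (1 / (1 + s) ^ (M - 1))" for s :: real
  have "(\<integral>\<^sup>+s. ennreal (1 / (1 + s) ^ M) * indicator {0..} s \<partial>lborel) = ennreal (0 - F 0)"
  proof (rule nn_integral_FTC_atLeast)
    have h: "((\<lambda>s::real. 1 / (1 + s) ^ (M - 1)) \<longlongrightarrow> 0) at_top" using M by (intro inv_pow_tendsto) auto
    show "(F \<longlongrightarrow> 0) at_top" unfolding F_def by (rule tendsto_mult_right_zero[OF h])
    fix x :: real assume x: "0 \<le> x"
    have "DERIV F x :> - (1 / (real M - 1)) * (- real (M - 1) * (1 / (1 + x) ^ (M - 1 + 1)))"
      unfolding F_def using M x by (intro DERIV_cmult dinv) auto
    moreover have "- (1 / (real M - 1)) * (- real (M - 1) * (1 / (1 + x) ^ (M - 1 + 1))) = 1 / (1 + x) ^ M"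
    proof -
      have "real M - 1 \<noteq> 0" "(1 + x) ^ M \<noteq> 0" using M x by auto
      then show ?thesis using M by (simp add: of_nat_diff field_simps)
    qed
    ultimately show "DERIV F x :> 1 / (1 + x) ^ M" by simp
  qed auto
  then show ?thesis by (simp add: F_def)
qed

lemma s_int2:
  fixes M :: nat assumes M: "M \<ge> 3"
  shows "(\<integral>\<^sup>+s. ennreal (s / (1 + s) ^ M) * indicator {0..} s \<partial>lborel) = ennreal (1 / ((real M - 1) * (real M - 2)))"
proof -
  define F where "F s = - (1 / (real M - 2)) * (1 / (1 + s) ^ (M - 2)) + (1 / (real M - 1)) * (1 / (1 + s) ^ (M - 1))" for s :: real
  have "(\<integral>\<^sup>+s. ennreal (s / (1 + s) ^ M) * indicator {0..} s \<partial>lborel) = ennreal (0 - F 0)"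
  proof (rule nn_integral_FTC_atLeast)
    have h1: "((\<lambda>s::real. 1 / (1 + s) ^ (M - 1)) \<longlongrightarrow> 0) at_top" using M by (intro inv_pow_tendsto) auto
    have h2: "((\<lambda>s::real. 1 / (1 + s) ^ (M - 2)) \<longlongrightarrow> 0) at_top" using M by (intro inv_pow_tendsto) auto
    show "(F \<longlongrightarrow> 0) at_top" unfolding F_def
      by (rule tendsto_add_zero[OF tendsto_mult_right_zero[OF h2] tendsto_mult_right_zero[OF h1]])
    fix x :: real assume x: "0 \<le> x"
    have "DERIV F x :> - (1 / (real M - 2)) * (- real (M - 2) * (1 / (1 + x) ^ (M - 2 + 1)))
        + (1 / (real M - 1)) * (- real (M - 1) * (1 / (1 + x) ^ (M - 1 + 1)))"
      unfolding F_def using M x by (intro DERIV_add DERIV_cmult dinv) auto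
    moreover have "- (1 / (real M - 2)) * (- real (M - 2) * (1 / (1 + x) ^ (M - 2 + 1)))
        + (1 / (real M - 1)) * (- real (M - 1) * (1 / (1 + x) ^ (M - 1 + 1))) = x / (1 + x) ^ M"
    proof -
      have e: "M - 2 + 1 = M - 1" "M - 1 + 1 = M" using M by auto
      have p: "(1 + x) ^ M = (1 + x) ^ (M - 1) * (1 + x)" using M by (simp flip: power_Suc2)
      have pos: "(1 + x) ^ (M - 1) > 0" using x by auto
      have gen: "\<And>P a b y::real. a \<noteq> 0 \<Longrightarrow> b \<noteq> 0 \<Longrightarrow> P > 0 \<Longrightarrow> y = 1 + x \<Longrightarrow> y > 0 \<Longrightarrow>
          - (1 / a) * (- a * (1 / P)) + (1 / b) * (- b * (1 / (P * y))) = x / (P * y)"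
      proof -
        fix P a b y :: real assume h: "a \<noteq> 0" "b \<noteq> 0" "P > 0" "y = 1 + x" "y > 0"
        have "- (1 / a) * (- a * (1 / P)) + (1 / b) * (- b * (1 / (P * y))) = 1 / P - 1 / (P * y)"
          using h by simp
        also have "\<dots> = (y - 1) / (P * y)" using h(3,5) by (simp add: field_simps)
        also have "\<dots> = x / (P * y)" using h by simp
        finally show "- (1 / a) * (- a * (1 / P)) + (1 / b) * (- b * (1 / (P * y))) = x / (P * y)" .
      qed
      have ab: "real (M - 2) = real M - 2" "real (M - 1) = real M - 1" using M by (simp_all add: of_nat_diff)
      show ?thesis unfolding e p ab using M pos x by (intro gen) auto
    qed
    ultimately show "DERIV F x :> x / (1 + x) ^ M" by simp
  qed auto
  also have "0 - F 0 = 1 / ((real M - 1) * (real M - 2))"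
    using M by (simp add: F_def field_simps)
  finally show ?thesis .
qed

lemma cnj_meas[measurable (raw)]: "f \<in> borel_measurable M \<Longrightarrow> (\<lambda>x. cnj (f x)) \<in> borel_measurable M"
  by (rule borel_measurable_continuous_on[where f=cnj]) (auto intro: continuous_intros)

definition aa :: "nat \<Rightarrow> nat \<Rightarrow> (nat \<times> nat \<Rightarrow> complex) \<Rightarrow> real" where
  "aa M k H = (\<Sum>m\<in>{1..M}. (cmod (H (m, k)))\<^sup>2)"
definition bb :: "nat \<Rightarrow> nat \<Rightarrow> nat \<Rightarrow> (nat \<times> nat \<Rightarrow> complex) \<Rightarrow> real" where
  "bb M k i H = (cmod (\<Sum>m\<in>{1..M}. cnj (H (m, k)) * H (m, i)))\<^sup>2"

lemma aa_nonneg: "aa M k H \<ge> 0" unfolding aa_def by (intro sum_nonneg) auto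

lemma compH_meas: "m \<in> {1..M} \<Longrightarrow> j \<in> {1..K} \<Longrightarrow> (\<lambda>H. H (m, j)) \<in> borel_measurable (H_dist M K)"
  unfolding H_dist_def by (rule comp_meas) auto

lemma aa_meas: "k \<in> {1..K} \<Longrightarrow> aa M k \<in> borel_measurable (H_dist M K)"
proof -
  assume k: "k \<in> {1..K}"
  have "(\<lambda>H. \<Sum>m\<in>{1..M}. (cmod (H (m, k)))\<^sup>2) \<in> borel_measurable (H_dist M K)"
    using compH_meas[OF _ k] by (intro borel_measurable_sum) measurable
  then show ?thesis by (simp add: aa_def[abs_def])
qed

lemma bb_meas: "k \<in> {1..K} \<Longrightarrow> i \<in> {1..K} \<Longrightarrow> bb M k i \<in> borel_measurable (H_dist M K)"
proof -
  assume k: "k \<in> {1..K}" and i: "i \<in> {1..K}"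
  have "(\<lambda>H. \<Sum>m\<in>{1..M}. cnj (H (m, k)) * H (m, i)) \<in> borel_measurable (H_dist M K)"
    using compH_meas[OF _ k] compH_meas[OF _ i] by (intro borel_measurable_sum) measurable
  then have "(\<lambda>H. (cmod (\<Sum>m\<in>{1..M}. cnj (H (m, k)) * H (m, i)))\<^sup>2) \<in> borel_measurable (H_dist M K)"
    by measurable
  then show ?thesis by (simp add: bb_def[abs_def])
qed

lemma prob_H: "prob_space (H_dist M K)"
  unfolding H_dist_def by (rule prob_PiCN)

lemma sum_single: "finite A \<Longrightarrow> (\<Sum>z\<in>A \<times> {i}. g z) = (\<Sum>m\<in>A. g (m, i))"
proof -
  assume A: "finite A"
  have "(\<Sum>z\<in>A \<times> {i}. g z) = (\<Sum>(m,j)\<in>A \<times> {i}. g (m,j))" by (simp add: case_prod_beta)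
  also have "\<dots> = (\<Sum>m\<in>A. \<Sum>j\<in>{i}. g (m,j))" by (rule sum.cartesian_product[symmetric])
  finally show ?thesis by simp
qed

lemma prod_filter_k:
  fixes M K k :: nat
  assumes k: "k \<in> {1..K}"
  shows "(\<Prod>x\<in>{1..M} \<times> {1..K}. if snd x = k then g x else 1) = (\<Prod>m\<in>{1..M}. g (m, k))"
proof -
  have "(\<Prod>x\<in>{1..M} \<times> {1..K}. if snd x = k then g x else 1) = (\<Prod>x\<in>{x\<in>{1..M} \<times> {1..K}. snd x = k}. g x)"
    by (rule prod.inter_filter[symmetric]) (simp add: finite_cartesian_product)
  also have "{x\<in>{1..M} \<times> {1..K}. snd x = k} = {1..M} \<times> {k}" using k by auto
  also have "(\<Prod>x\<in>{1..M} \<times> {k}. g x) = (\<Prod>(m,j)\<in>{1..M} \<times> {k}. g (m,j))" by (simp add: case_prod_beta)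
  also have "\<dots> = (\<Prod>m\<in>{1..M}. \<Prod>j\<in>{k}. g (m,j))" by (rule prod.cartesian_product[symmetric])
  finally show ?thesis by simp
qed

lemma E_exp:
  assumes k: "k \<in> {1..K}" and s: "s \<ge> 0"
  shows "(\<integral>\<^sup>+H. ennreal (exp (- s * aa M k H)) \<partial>H_dist M K) = ennreal (1 / (1 + s) ^ M)"
proof -
  interpret product_sigma_finite "\<lambda>_::nat \<times> nat. CN_std" by (rule psf_CN)
  let ?f = "\<lambda>x::nat\<times>nat. \<lambda>z::complex. ennreal (if snd x = k then exp (- s * (cmod z)\<^sup>2) else 1)"
  have "(\<integral>\<^sup>+H. ennreal (exp (- s * aa M k H)) \<partial>H_dist M K) = (\<integral>\<^sup>+H. (\<Prod>x\<in>{1..M} \<times> {1..K}. ?f x (H x)) \<partial>H_dist M K)"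
  proof (intro nn_integral_cong)
    fix H :: "nat \<times> nat \<Rightarrow> complex"
    have e1: "(\<Prod>x\<in>{1..M} \<times> {1..K}. ?f x (H x)) = ennreal (\<Prod>x\<in>{1..M} \<times> {1..K}. if snd x = k then exp (- s * (cmod (H x))\<^sup>2) else 1)"
      by (rule prod_ennreal) auto
    have e2: "(\<Prod>x\<in>{1..M} \<times> {1..K}. if snd x = k then exp (- s * (cmod (H x))\<^sup>2) else 1) = (\<Prod>m\<in>{1..M}. exp (- s * (cmod (H (m, k)))\<^sup>2))"
      by (rule prod_filter_k[OF k])
    have e3: "(\<Prod>m\<in>{1..M}. exp (- s * (cmod (H (m, k)))\<^sup>2)) = exp (- s * aa M k H)"
      by (simp add: aa_def exp_sum sum_distrib_left)
    show "ennreal (exp (- s * aa M k H)) = (\<Prod>x\<in>{1..M} \<times> {1..K}. ?f x (H x))"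
      unfolding e1 e2 e3 ..
  qed
  also have "\<dots> = (\<Prod>x\<in>{1..M} \<times> {1..K}. integral\<^sup>N CN_std (?f x))"
    unfolding H_dist_def by (rule product_nn_integral_prod) auto
  also have "\<dots> = (\<Prod>x\<in>{1..M} \<times> {1..K}. if snd x = k then ennreal (1 / (1 + s)) else 1)"
    by (intro prod.cong refl) (use cn_exp[OF s] in auto)
  also have "\<dots> = (\<Prod>m\<in>{1..M}. ennreal (1 / (1 + s)))"
    by (rule prod_filter_k[OF k])
  also have "\<dots> = ennreal (1 / (1 + s) ^ M)"
    using s by (simp only: prod_constant card_atLeastAtMost, subst ennreal_power) (simp_all add: power_one_over)
  finally show ?thesis .
qed

lemma pair_H_lborel: "pair_sigma_finite (H_dist M K) (lborel::real measure)"
  by (intro pair_sigma_finite.intro prob_space_imp_sigma_finite prob_H sigma_finite_lborel)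

lemma E_L1:
  assumes M: "M \<ge> 2" and k: "k \<in> {1..K}"
  shows "(\<integral>\<^sup>+H. L1 (aa M k H) \<partial>H_dist M K) = ennreal (1 / (real M - 1))"
proof -
  interpret pair_sigma_finite "H_dist M K" "lborel::real measure" by (rule pair_H_lborel)
  note [measurable] = aa_meas[OF k]
  have "(\<integral>\<^sup>+H. L1 (aa M k H) \<partial>H_dist M K)
      = (\<integral>\<^sup>+H. (\<integral>\<^sup>+s. ennreal (exp (- s * aa M k H)) * indicator {0..} s \<partial>lborel) \<partial>H_dist M K)"
    by (simp add: L1_def)
  also have "\<dots> = (\<integral>\<^sup>+s. (\<integral>\<^sup>+H. ennreal (exp (- s * aa M k H)) * indicator {0..} s \<partial>H_dist M K) \<partial>lborel)"
    by (rule Fubini'[symmetric]) measurable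
  also have "\<dots> = (\<integral>\<^sup>+s. ennreal (1 / (1 + s) ^ M) * indicator {0..} s \<partial>lborel)"
  proof (intro nn_integral_cong)
    fix s :: real
    show "(\<integral>\<^sup>+H. ennreal (exp (- s * aa M k H)) * indicator {0..} s \<partial>H_dist M K) = ennreal (1 / (1 + s) ^ M) * indicator {0..} s"
      by (subst nn_integral_multc) (use E_exp[OF k] in \<open>auto split: split_indicator\<close>)
  qed
  also have "\<dots> = ennreal (1 / (real M - 1))" by (rule s_int1[OF M])
  finally show ?thesis .
qed

lemma E_L2:
  assumes M: "M \<ge> 3" and k: "k \<in> {1..K}"
  shows "(\<integral>\<^sup>+H. L2 (aa M k H) \<partial>H_dist M K) = ennreal (1 / ((real M - 1) * (real M - 2)))"
proof -
  interpret pair_sigma_finite "H_dist M K" "lborel::real measure" by (rule pair_H_lborel)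
  note [measurable] = aa_meas[OF k]
  have "(\<integral>\<^sup>+H. L2 (aa M k H) \<partial>H_dist M K)
      = (\<integral>\<^sup>+H. (\<integral>\<^sup>+s. ennreal (s * exp (- s * aa M k H)) * indicator {0..} s \<partial>lborel) \<partial>H_dist M K)"
    by (simp add: L2_def)
  also have "\<dots> = (\<integral>\<^sup>+s. (\<integral>\<^sup>+H. ennreal (s * exp (- s * aa M k H)) * indicator {0..} s \<partial>H_dist M K) \<partial>lborel)"
    by (rule Fubini'[symmetric]) measurable
  also have "\<dots> = (\<integral>\<^sup>+s. ennreal (s / (1 + s) ^ M) * indicator {0..} s \<partial>lborel)"
  proof (intro nn_integral_cong)
    fix s :: real
    show "(\<integral>\<^sup>+H. ennreal (s * exp (- s * aa M k H)) * indicator {0..} s \<partial>H_dist M K) = ennreal (s / (1 + s) ^ M) * indicator {0..} s"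
    proof (cases "s \<ge> 0")
      case True
      have "(\<integral>\<^sup>+H. ennreal (s * exp (- s * aa M k H)) * indicator {0..} s \<partial>H_dist M K)
          = (\<integral>\<^sup>+H. ennreal s * ennreal (exp (- s * aa M k H)) \<partial>H_dist M K)"
        using True by (intro nn_integral_cong) (simp add: ennreal_mult)
      also have "\<dots> = ennreal s * ennreal (1 / (1 + s) ^ M)"
        using E_exp[OF k True] by (subst nn_integral_cmult) auto
      also have "\<dots> = ennreal (s / (1 + s) ^ M) * indicator {0..} s"
        using True by (simp add: ennreal_mult[symmetric])
      finally show ?thesis .
    qed simp
  qed
  also have "\<dots> = ennreal (1 / ((real M - 1) * (real M - 2)))" by (rule s_int2[OF M])
  finally show ?thesis .
qed

lemma E_bb:
  assumes k: "k \<in> {1..K}" and i: "i \<in> {1..K}" and ik: "i \<noteq> k"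
  shows "(\<integral>\<^sup>+H. ennreal (bb M k i H) * L2 (aa M k H) \<partial>H_dist M K) = (\<integral>\<^sup>+H. ennreal (aa M k H) * L2 (aa M k H) \<partial>H_dist M K)"
proof -
  interpret product_sigma_finite "\<lambda>_::nat \<times> nat. CN_std" by (rule psf_CN)
  define I where "I = {1..M} \<times> {1..K}"
  define Ci where "Ci = {1..M} \<times> {i}"
  define I1 where "I1 = I - Ci"
  have IU: "I = I1 \<union> Ci" and disj: "I1 \<inter> Ci = {}" and fin: "finite I1" "finite Ci"
    using i by (auto simp: I_def Ci_def I1_def)
  have HD: "H_dist M K = PiM (I1 \<union> Ci) (\<lambda>_. CN_std)" by (simp only: H_dist_def IU[symmetric] I_def)
  have kI1: "(m, k) \<in> I1" if "m \<in> {1..M}" for m using that k ik by (auto simp: I1_def I_def Ci_def)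
  have aa_merge: "aa M k (merge I1 Ci (x, y)) = aa M k x" for x y
    unfolding aa_def by (intro sum.cong refl) (simp add: kI1 merge_def)
  have bb_merge: "bb M k i (merge I1 Ci (x, y)) = (cmod (\<Sum>z\<in>Ci. cnj (x (fst z, k)) * y z))\<^sup>2" for x y
  proof -
    have "(\<Sum>m\<in>{1..M}. cnj (merge I1 Ci (x, y) (m, k)) * merge I1 Ci (x, y) (m, i))
        = (\<Sum>m\<in>{1..M}. cnj (x (m, k)) * y (m, i))"
    proof (intro sum.cong refl)
      fix m assume m: "m \<in> {1..M}"
      have "(m,i) \<notin> I1" "(m,i) \<in> Ci" using m by (auto simp: I1_def Ci_def)
      then show "cnj (merge I1 Ci (x, y) (m, k)) * merge I1 Ci (x, y) (m, i) = cnj (x (m, k)) * y (m, i)"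
        using kI1[OF m] by (simp add: merge_def)
    qed
    also have "\<dots> = (\<Sum>z\<in>Ci. cnj (x (fst z, k)) * y z)"
      unfolding Ci_def by (subst sum_single) auto
    finally show ?thesis by (simp add: bb_def)
  qed
  note [measurable] = aa_meas[OF k] bb_meas[OF k i]
  have m1: "(\<lambda>H. ennreal (bb M k i H) * L2 (aa M k H)) \<in> borel_measurable (PiM (I1 \<union> Ci) (\<lambda>_. CN_std))"
    unfolding HD[symmetric] by (simp add: L2_def) measurable
  have m2: "(\<lambda>H. ennreal (aa M k H) * L2 (aa M k H)) \<in> borel_measurable (PiM (I1 \<union> Ci) (\<lambda>_. CN_std))"
    unfolding HD[symmetric] by (simp add: L2_def) measurable
  have "(\<integral>\<^sup>+H. ennreal (bb M k i H) * L2 (aa M k H) \<partial>H_dist M K)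
      = (\<integral>\<^sup>+x. (\<integral>\<^sup>+y. ennreal (bb M k i (merge I1 Ci (x, y))) * L2 (aa M k (merge I1 Ci (x, y))) \<partial>PiM Ci (\<lambda>_. CN_std)) \<partial>PiM I1 (\<lambda>_. CN_std))"
    unfolding HD by (rule product_nn_integral_fold[OF disj fin m1])
  also have "\<dots> = (\<integral>\<^sup>+x. ennreal (aa M k x) * L2 (aa M k x) \<partial>PiM I1 (\<lambda>_. CN_std))"
  proof (intro nn_integral_cong)
    fix x :: "nat \<times> nat \<Rightarrow> complex"
    have "(\<integral>\<^sup>+y. ennreal (bb M k i (merge I1 Ci (x, y))) * L2 (aa M k (merge I1 Ci (x, y))) \<partial>PiM Ci (\<lambda>_. CN_std))
        = (\<integral>\<^sup>+y. ennreal ((cmod (\<Sum>z\<in>Ci. cnj (x (fst z, k)) * y z))\<^sup>2) * L2 (aa M k x) \<partial>PiM Ci (\<lambda>_. CN_std))"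
      by (simp add: aa_merge bb_merge)
    also have "\<dots> = ennreal (\<Sum>z\<in>Ci. (cmod (cnj (x (fst z, k))))\<^sup>2) * L2 (aa M k x)"
      using sum_meas[of Ci Ci "\<lambda>z. cnj (x (fst z, k))"]
      by (subst nn_integral_multc) (auto simp: pn_lin fin)
    also have "(\<Sum>z\<in>Ci. (cmod (cnj (x (fst z, k))))\<^sup>2) = aa M k x"
      unfolding Ci_def aa_def by (subst sum_single) auto
    finally show "(\<integral>\<^sup>+y. ennreal (bb M k i (merge I1 Ci (x, y))) * L2 (aa M k (merge I1 Ci (x, y))) \<partial>PiM Ci (\<lambda>_. CN_std))
        = ennreal (aa M k x) * L2 (aa M k x)" .
  qed
  also have "\<dots> = (\<integral>\<^sup>+x. (\<integral>\<^sup>+y. ennreal (aa M k (merge I1 Ci (x, y))) * L2 (aa M k (merge I1 Ci (x, y))) \<partial>PiM Ci (\<lambda>_. CN_std)) \<partial>PiM I1 (\<lambda>_. CN_std))"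
    by (intro nn_integral_cong) (simp add: aa_merge)
  also have "\<dots> = (\<integral>\<^sup>+H. ennreal (aa M k H) * L2 (aa M k H) \<partial>H_dist M K)"
    unfolding HD by (rule product_nn_integral_fold[OF disj fin m2, symmetric])
  finally show ?thesis .
qed

lemma tangent_ln:
  fixes u u0 :: real assumes u: "u > 0" and u0: "u0 > 0"
  shows "ln (1 + 1 / u) \<ge> ln (1 + 1 / u0) - (u - u0) / (u0 * (u0 + 1))"
proof -
  define q where "q = (1 + 1 / u) / (1 + 1 / u0)"
  have qpos: "q > 0" using u u0 by (simp add: q_def add_pos_pos)
  have lnq: "ln (1 + 1 / u) - ln (1 + 1 / u0) = ln q"
  proof -
    have "1 + 1 / u > 0" "1 + 1 / u0 > 0" using u u0 by (simp_all add: add_pos_pos)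
    then show ?thesis by (simp add: q_def ln_div)
  qed
  have "ln (1 / q) \<le> 1 / q - 1" using qpos by (intro ln_le_minus_one) simp
  then have l1: "ln q \<ge> 1 - 1 / q" using qpos by (simp add: ln_div)
  have e: "1 - 1 / q = (u0 - u) / (u0 * (u + 1))"
  proof -
    have q: "1 / q = (u * (u0 + 1)) / (u0 * (u + 1))" using u u0 by (simp add: q_def field_simps)
    have g: "\<And>a d::real. d \<noteq> 0 \<Longrightarrow> 1 - a / d = (d - a) / d" by (simp add: field_simps)
    have "1 - 1 / q = (u0 * (u + 1) - u * (u0 + 1)) / (u0 * (u + 1))"
      unfolding q using u u0 by (intro g) simp
    also have "u0 * (u + 1) - u * (u0 + 1) = u0 - u" by (simp add: algebra_simps)
    finally show ?thesis .
  qed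
  have "(u0 - u) / (u0 * (u0 + 1)) \<le> (u0 - u) / (u0 * (u + 1))"
  proof -
    have "(u0 - u) * (u0 * (u + 1)) \<le> (u0 - u) * (u0 * (u0 + 1))"
    proof -
      have "(u0 - u) * (u0 * (u0 + 1)) - (u0 - u) * (u0 * (u + 1)) = u0 * (u0 - u)\<^sup>2"
        by (simp add: algebra_simps power2_eq_square)
      moreover have "u0 * (u0 - u)\<^sup>2 \<ge> 0" using u0 by simp
      ultimately show ?thesis by linarith
    qed
    moreover have "u0 * (u0 + 1) > 0" "u0 * (u + 1) > 0" using u u0 by auto
    ultimately show ?thesis by (simp add: divide_le_eq le_divide_eq field_simps)
  qed
  moreover have "(u - u0) / (u0 * (u0 + 1)) = - ((u0 - u) / (u0 * (u0 + 1)))"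
    by (simp add: minus_divide_left)
  ultimately show ?thesis using lnq l1 e by linarith
qed

lemma tangent_log:
  fixes u u0 :: real assumes u: "u > 0" and u0: "u0 > 0"
  shows "log 2 (1 + 1 / u) \<ge> log 2 (1 + 1 / u0) + (- 1 / (ln 2 * u0 * (u0 + 1))) * (u - u0)"
proof -
  have "ln (1 + 1 / u) / ln 2 \<ge> (ln (1 + 1 / u0) - (u - u0) / (u0 * (u0 + 1))) / ln 2"
    using tangent_ln[OF u u0] by (intro divide_right_mono) auto
  moreover have "(ln (1 + 1 / u0) - (u - u0) / (u0 * (u0 + 1))) / ln 2 = log 2 (1 + 1 / u0) + (- 1 / (ln 2 * u0 * (u0 + 1))) * (u - u0)"
  proof -
    have L: "ln 2 \<noteq> (0::real)" by simp
    have D: "u0 * (u0 + 1) \<noteq> 0" using u0 by simp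
    have g: "\<And>x y D L::real. L \<noteq> 0 \<Longrightarrow> D \<noteq> 0 \<Longrightarrow> (x - y / D) / L = x / L + (- 1 / (L * D)) * y"
      by (simp add: field_simps)
    show ?thesis unfolding log_def using g[OF L D] by (simp add: mult.assoc)
  qed
  ultimately show ?thesis by (simp add: log_def)
qed

lemma log_bound:
  fixes w y :: real assumes y: "y \<ge> 0" and w1: "1 \<le> w" and w: "w \<le> 1 + y\<^sup>2"
  shows "log 2 w \<le> 2 / ln 2 * y"
proof -
  have "w \<le> (1 + y)\<^sup>2" using w y by (simp add: power2_eq_square algebra_simps)
  then have "ln w \<le> ln ((1 + y)\<^sup>2)" using w1 by (subst ln_le_cancel_iff) auto
  also have "\<dots> = 2 * ln (1 + y)" using y by (simp add: ln_realpow)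
  also have "\<dots> \<le> 2 * y" using y by (simp add: ln_add_one_self_le_self)
  finally have "ln w \<le> 2 * y" .
  then show ?thesis by (simp add: log_def divide_right_mono)
qed

lemma gnorm2_eq: "\<beta> k \<ge> 0 \<Longrightarrow> gnorm2 M \<beta> H k = \<beta> k * aa M k H"
  unfolding gnorm2_def aa_def gcol_def
  by (simp add: sum_distrib_left norm_mult power_mult_distrib mult.commute)

lemma ginner_eq:
  assumes "\<beta> k \<ge> 0" "\<beta> i \<ge> 0"
  shows "(cmod (ginner M \<beta> H k i))\<^sup>2 = \<beta> k * \<beta> i * bb M k i H"
proof -
  have "ginner M \<beta> H k i = complex_of_real (sqrt (\<beta> k) * sqrt (\<beta> i)) * (\<Sum>m\<in>{1..M}. cnj (H (m, k)) * H (m, i))"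
    unfolding ginner_def gcol_def by (simp add: sum_distrib_left algebra_simps)
  then have "(cmod (ginner M \<beta> H k i))\<^sup>2 = (sqrt (\<beta> k) * sqrt (\<beta> i))\<^sup>2 * (cmod (\<Sum>m\<in>{1..M}. cnj (H (m, k)) * H (m, i)))\<^sup>2"
    by (simp add: norm_mult power_mult_distrib)
  also have "(sqrt (\<beta> k) * sqrt (\<beta> i))\<^sup>2 = \<beta> k * \<beta> i" using assms by (simp add: power_mult_distrib)
  finally show ?thesis by (simp add: bb_def)
qed

lemma k_notin_interf: "k \<notin> interf K k t"
proof -
  have "jidx K (int k) t \<in> Vset K k t"
    unfolding Vset_def by (rule CollectI, rule exI[of _ t]) simp
  then show ?thesis by (simp add: interf_def)
qed

theorem proposition2:
  fixes M K k t :: nat and Pr :: real and \<beta> :: "nat \<Rightarrow> real"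
  assumes "M \<ge> 3" and "K \<ge> 2" and "Pr > 0"
    and "\<forall>i\<in>{1..K}. \<beta> i > 0"
    and "k \<in> {1..K}" and "t \<in> {1..K-1}"
  shows "R_dl M K Pr \<beta> k t \<ge>
    log 2 (1 + Pr * (real M - 1) * (real M - 2) * (\<beta> k)\<^sup>2 /
      (Pr * (real M - 2) * \<beta> k * (\<Sum>i\<in>interf K k t. \<beta> i) + real M * (\<Sum>i\<in>{1..K}. \<beta> i)))"
proof -
  note M3 = assms(1) and Prp = assms(3) and bpos = assms(4) and k = assms(5)
  interpret P: prob_space "H_dist M K" by (rule prob_H)
  define T where "T = interf K k t"
  define Sb where "Sb = (\<Sum>i\<in>{1..K}. \<beta> i)"
  define \<rho> where "\<rho> = Pr / (real M * Sb)"
  have bk: "\<beta> k > 0" using bpos k by auto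
  have Sbp: "Sb > 0" unfolding Sb_def using bpos assms(2) by (intro sum_pos) auto
  have rho: "\<rho> > 0" unfolding \<rho>_def using Prp Sbp M3 by auto
  have TK: "T \<subseteq> {1..K}" by (auto simp: T_def interf_def)
  have finT: "finite T" using TK by (rule finite_subset) simp
  have kT: "k \<notin> T" unfolding T_def by (rule k_notin_interf)
  have bT: "\<beta> i > 0" if "i \<in> T" for i using that TK bpos by auto
  have bT': "\<beta> i \<ge> 0" if "i \<in> T" for i using bT[OF that] by simp
  have bk': "\<beta> k \<ge> 0" using bk by simp
  note [measurable] = aa_meas[OF k]
  have bbm[measurable]: "bb M k i \<in> borel_measurable (H_dist M K)" if "i \<in> T" for i
    using that TK k by (intro bb_meas) auto
  define S where "S H = (\<Sum>i\<in>T. \<beta> k * \<beta> i * bb M k i H)" for H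
  define X where "X H = (\<beta> k * aa M k H)\<^sup>2" for H
  define F where "F H = log 2 (1 + \<rho> * X H / (\<rho> * S H + 1))" for H
  define u where "u H = (\<rho> * S H + 1) / (\<rho> * X H)" for H
  define u0 where "u0 = (\<Sum>i\<in>T. \<beta> i / (\<beta> k * (real M - 1))) + 1 / (\<rho> * (\<beta> k)\<^sup>2 * ((real M - 1) * (real M - 2)))"
  have S_nonneg: "S H \<ge> 0" for H
    unfolding S_def using bk bT bT' bk' by (intro sum_nonneg mult_nonneg_nonneg) (auto simp: bb_def less_imp_le)
  have X_nonneg: "X H \<ge> 0" for H by (simp add: X_def)
  have Sm[measurable]: "S \<in> borel_measurable (H_dist M K)"
    unfolding S_def[abs_def] by (intro borel_measurable_sum) (auto intro!: borel_measurable_times)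
  have Xm[measurable]: "X \<in> borel_measurable (H_dist M K)" unfolding X_def[abs_def] by measurable
  have Fm[measurable]: "F \<in> borel_measurable (H_dist M K)" unfolding F_def[abs_def] by measurable
  have um[measurable]: "u \<in> borel_measurable (H_dist M K)" unfolding u_def[abs_def] by measurable
  have u_nonneg: "u H \<ge> 0" for H unfolding u_def using S_nonneg X_nonneg rho by simp
  have sT: "(\<Sum>i\<in>T. \<beta> i / (\<beta> k * (real M - 1))) \<ge> 0" using bT bk M3
      by (intro sum_nonneg divide_nonneg_nonneg mult_nonneg_nonneg) (auto intro: less_imp_le)
  have u0pos: "u0 > 0"
  proof -
    have "(\<Sum>i\<in>T. \<beta> i / (\<beta> k * (real M - 1))) \<ge> 0" using bT bk bT' bk' M3
      by (intro sum_nonneg divide_nonneg_nonneg mult_nonneg_nonneg) (auto intro: less_imp_le)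
    moreover have "1 / (\<rho> * (\<beta> k)\<^sup>2 * ((real M - 1) * (real M - 2))) > 0" using rho bk M3 by simp
    ultimately show ?thesis unfolding u0_def by linarith
  qed

  have R_eq: "R_dl M K Pr \<beta> k t = (\<integral>H. F H \<partial>H_dist M K)"
  proof -
    have "R_dl M K Pr \<beta> k t = (\<integral>H. log 2 (1 + \<rho> * (gnorm2 M \<beta> H k)\<^sup>2 /
               (\<rho> * (\<Sum>i\<in>T. (cmod (ginner M \<beta> H k i))\<^sup>2) + 1)) \<partial>(H_dist M K))"
      unfolding R_dl_def Let_def \<rho>_def Sb_def T_def ..
    also have "\<dots> = (\<integral>H. F H \<partial>H_dist M K)"
    proof (intro Bochner_Integration.integral_cong refl)
      fix H
      have "(\<Sum>i\<in>T. (cmod (ginner M \<beta> H k i))\<^sup>2) = S H"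
        unfolding S_def using bk bT bT' bk' by (intro sum.cong refl ginner_eq) auto
      moreover have "(gnorm2 M \<beta> H k)\<^sup>2 = X H" using bk by (simp add: gnorm2_eq X_def)
      ultimately show "log 2 (1 + \<rho> * (gnorm2 M \<beta> H k)\<^sup>2 / (\<rho> * (\<Sum>i\<in>T. (cmod (ginner M \<beta> H k i))\<^sup>2) + 1)) = F H"
        by (simp add: F_def)
    qed
    finally show ?thesis .
  qed

  have L1m[measurable]: "(\<lambda>H. L1 (aa M k H)) \<in> borel_measurable (H_dist M K)"
    unfolding L1_def by measurable
  have L2m[measurable]: "(\<lambda>H. L2 (aa M k H)) \<in> borel_measurable (H_dist M K)"
    unfolding L2_def by measurable
  have AEpos: "AE H in H_dist M K. aa M k H > 0"
  proof -
    have "(\<integral>\<^sup>+H. L1 (aa M k H) \<partial>H_dist M K) \<noteq> \<infinity>"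
      using M3 k by (simp add: E_L1)
    then have "AE H in H_dist M K. L1 (aa M k H) \<noteq> \<infinity>"
      by (intro nn_integral_PInf_AE) auto
    then show ?thesis
    proof (rule eventually_mono)
      fix H assume "L1 (aa M k H) \<noteq> \<infinity>"
      then have "aa M k H \<noteq> 0" using L1_zero by auto
      then show "aa M k H > 0" using aa_nonneg[of M k H] by linarith
    qed
  qed

  define c where "c = 1 / (\<rho> * (\<beta> k)\<^sup>2)"
  define U where "U H = (\<Sum>i\<in>T. ennreal (\<beta> i / \<beta> k) * (ennreal (bb M k i H) * L2 (aa M k H))) + ennreal c * L2 (aa M k H)" for H
  have uU: "AE H in H_dist M K. ennreal (u H) = U H"
    using AEpos
  proof (rule eventually_mono)
    fix H assume a: "aa M k H > 0"
    let ?a = "aa M k H"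
    have "u H = \<rho> * S H / (\<rho> * X H) + 1 / (\<rho> * X H)"
      unfolding u_def by (simp add: add_divide_distrib)
    also have "\<rho> * S H / (\<rho> * X H) = S H / X H" using rho by simp
    also have "S H / X H = (\<Sum>i\<in>T. (\<beta> i / \<beta> k) * (bb M k i H * (1 / ?a\<^sup>2)))"
      unfolding S_def sum_divide_distrib
    proof (intro sum.cong refl)
      fix i
      show "\<beta> k * \<beta> i * bb M k i H / X H = \<beta> i / \<beta> k * (bb M k i H * (1 / ?a\<^sup>2))"
        unfolding X_def using bk a by (simp add: field_simps power2_eq_square)
    qed
    also have "1 / (\<rho> * X H) = c * (1 / ?a\<^sup>2)"
      unfolding X_def c_def using bk a rho by (simp add: field_simps power2_eq_square)
    finally have ueq: "u H = (\<Sum>i\<in>T. (\<beta> i / \<beta> k) * (bb M k i H * (1 / ?a\<^sup>2))) + c * (1 / ?a\<^sup>2)" .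
    have nn1: "\<And>i. i \<in> T \<Longrightarrow> 0 \<le> (\<beta> i / \<beta> k) * (bb M k i H * (1 / ?a\<^sup>2))"
      using bT bk bT' bk' by (auto simp: bb_def intro!: mult_nonneg_nonneg divide_nonneg_nonneg less_imp_le)
    have c0: "c \<ge> 0" unfolding c_def using rho by simp
    have "ennreal (u H) = (\<Sum>i\<in>T. ennreal ((\<beta> i / \<beta> k) * (bb M k i H * (1 / ?a\<^sup>2)))) + ennreal (c * (1 / ?a\<^sup>2))"
      unfolding ueq using nn1 c0 by (simp add: sum_ennreal sum_nonneg ennreal_plus)
    also have "\<dots> = U H"
      unfolding U_def L2_pos[OF a] using bT bk bT' bk' c0
      by (intro arg_cong2[where f="(+)"] sum.cong refl)
         (auto simp: ennreal_mult[symmetric] bb_def intro!: divide_nonneg_nonneg less_imp_le)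
    finally show "ennreal (u H) = U H" .
  qed
  have Ubound: "(\<integral>\<^sup>+H. U H \<partial>H_dist M K) \<le> ennreal u0"
  proof -
    have "(\<integral>\<^sup>+H. U H \<partial>H_dist M K) = (\<Sum>i\<in>T. ennreal (\<beta> i / \<beta> k) * (\<integral>\<^sup>+H. ennreal (bb M k i H) * L2 (aa M k H) \<partial>H_dist M K))
        + ennreal c * (\<integral>\<^sup>+H. L2 (aa M k H) \<partial>H_dist M K)"
      unfolding U_def
      by (subst nn_integral_add, (auto intro!: borel_measurable_sum)[2],
          subst nn_integral_sum, (auto)[1], subst nn_integral_cmult, (auto)[1]) (auto intro!: sum.cong nn_integral_cmult)
    also have "\<dots> \<le> (\<Sum>i\<in>T. ennreal (\<beta> i / \<beta> k) * ennreal (1 / (real M - 1)))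
        + ennreal c * ennreal (1 / ((real M - 1) * (real M - 2)))"
    proof (intro add_mono sum_mono mult_left_mono)
      fix i assume i: "i \<in> T"
      have "(\<integral>\<^sup>+H. ennreal (bb M k i H) * L2 (aa M k H) \<partial>H_dist M K) = (\<integral>\<^sup>+H. ennreal (aa M k H) * L2 (aa M k H) \<partial>H_dist M K)"
        using i TK kT k by (intro E_bb) auto
      also have "\<dots> \<le> (\<integral>\<^sup>+H. L1 (aa M k H) \<partial>H_dist M K)"
        by (intro nn_integral_mono L_nonneg_le aa_nonneg)
      also have "\<dots> = ennreal (1 / (real M - 1))" using M3 k by (intro E_L1) auto
      finally show "(\<integral>\<^sup>+H. ennreal (bb M k i H) * L2 (aa M k H) \<partial>H_dist M K) \<le> ennreal (1 / (real M - 1))" .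
    next
      show "(\<integral>\<^sup>+H. L2 (aa M k H) \<partial>H_dist M K) \<le> ennreal (1 / ((real M - 1) * (real M - 2)))"
        using M3 k by (simp add: E_L2)
    qed auto
    also have "\<dots> = ennreal u0"
    proof -
      have e1: "(\<Sum>i\<in>T. ennreal (\<beta> i / \<beta> k) * ennreal (1 / (real M - 1))) = ennreal (\<Sum>i\<in>T. \<beta> i / (\<beta> k * (real M - 1)))"
        using bT bk bT' bk' M3 by (subst sum_ennreal[symmetric]) (auto intro!: sum.cong simp: ennreal_mult[symmetric] less_imp_le)
      have e2: "ennreal c * ennreal (1 / ((real M - 1) * (real M - 2))) = ennreal (1 / (\<rho> * (\<beta> k)\<^sup>2 * ((real M - 1) * (real M - 2))))"
        unfolding c_def using rho M3 by (simp add: ennreal_mult[symmetric])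
      show ?thesis unfolding e1 e2 u0_def using bT bk bT' bk' M3 rho
        by (subst ennreal_plus) (use sT rho bk M3 in auto)
    qed
    finally show ?thesis .
  qed
  have nn_u: "(\<integral>\<^sup>+H. ennreal (u H) \<partial>H_dist M K) \<le> ennreal u0"
    using Ubound by (subst nn_integral_cong_AE[OF uU])
  have int_u: "integrable (H_dist M K) u"
    using le_less_trans[OF nn_u ennreal_less_top] by (intro integrableI_nonneg) (auto simp: u_nonneg)
  have Eu: "(\<integral>H. u H \<partial>H_dist M K) \<le> u0"
  proof -
    have "(\<integral>H. u H \<partial>H_dist M K) = enn2real (\<integral>\<^sup>+H. ennreal (u H) \<partial>H_dist M K)"
      by (rule integral_eq_nn_integral) (auto simp: u_nonneg)
    also have "\<dots> \<le> enn2real (ennreal u0)" using nn_u by (intro enn2real_mono) auto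
    also have "\<dots> = u0" using u0pos by simp
    finally show ?thesis .
  qed

  have sq1: "(\<integral>\<^sup>+H. ennreal ((cmod (H (m, k)))\<^sup>2) \<partial>H_dist M K) = 1" if m: "m \<in> {1..M}" for m
  proof -
    have "(\<integral>\<^sup>+y. ennreal ((cmod (\<Sum>z\<in>{(m, k)}. 1 * y z))\<^sup>2) \<partial>PiM ({1..M} \<times> {1..K}) (\<lambda>_. CN_std))
        = ennreal (\<Sum>z\<in>{(m, k)}. (cmod (1::complex))\<^sup>2)"
      using m k by (intro pn_lin) auto
    then show ?thesis by (simp add: H_dist_def)
  qed
  have int_aa: "integrable (H_dist M K) (aa M k)"
  proof (rule integrableI_nonneg)
    have "(\<integral>\<^sup>+H. ennreal (aa M k H) \<partial>H_dist M K) = (\<integral>\<^sup>+H. (\<Sum>m\<in>{1..M}. ennreal ((cmod (H (m, k)))\<^sup>2)) \<partial>H_dist M K)"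
      unfolding aa_def by (intro nn_integral_cong) (simp add: sum_ennreal)
    also have "\<dots> = (\<Sum>m\<in>{1..M}. (\<integral>\<^sup>+H. ennreal ((cmod (H (m, k)))\<^sup>2) \<partial>H_dist M K))"
      using compH_meas[OF _ k] by (intro nn_integral_sum) auto
    also have "\<dots> = (\<Sum>m\<in>{1..M}. 1)" by (intro sum.cong refl sq1)
    finally show "(\<integral>\<^sup>+H. ennreal (aa M k H) \<partial>H_dist M K) < \<infinity>" by (simp add: of_nat_less_top)
  qed (auto simp: aa_nonneg)
  define C where "C = 2 / ln 2 * (sqrt \<rho> * \<beta> k)"
  have F_nonneg: "F H \<ge> 0" for H
  proof -
    have "\<rho> * X H / (\<rho> * S H + 1) \<ge> 0" using rho S_nonneg X_nonneg by simp
    then show ?thesis unfolding F_def by simp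
  qed
  have F_le: "F H \<le> C * aa M k H" for H
  proof -
    define y where "y = sqrt \<rho> * \<beta> k * aa M k H"
    have y0: "y \<ge> 0" unfolding y_def using rho bk aa_nonneg[of M k H] by simp
    have y2: "y\<^sup>2 = \<rho> * X H" unfolding y_def X_def using rho by (simp add: power_mult_distrib)
    have d: "\<rho> * S H + 1 \<ge> 1" using rho S_nonneg[of H] by simp
    have q0: "\<rho> * X H \<ge> 0" using rho X_nonneg[of H] by simp
    have "\<rho> * X H / (\<rho> * S H + 1) \<le> \<rho> * X H"
      using d q0 by (simp add: divide_le_eq mult_le_cancel_left1 order_trans[OF _ mult_right_mono[OF d q0]] mult.commute)
    moreover have "\<rho> * X H / (\<rho> * S H + 1) \<ge> 0" using d q0 by simp
    ultimately have "log 2 (1 + \<rho> * X H / (\<rho> * S H + 1)) \<le> 2 / ln 2 * y"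
      using y2 by (intro log_bound y0) auto
    then show ?thesis unfolding F_def C_def y_def by (simp add: mult.assoc)
  qed
  have int_F: "integrable (H_dist M K) F"
  proof (rule Bochner_Integration.integrable_bound)
    show "integrable (H_dist M K) (\<lambda>H. C * aa M k H)" using int_aa by (rule integrable_mult_right)
    show "AE H in H_dist M K. norm (F H) \<le> norm (C * aa M k H)"
    proof (rule AE_I2)
      fix H
      have "C \<ge> 0" unfolding C_def using rho bk by simp
      then show "norm (F H) \<le> norm (C * aa M k H)"
        using F_nonneg[of H] F_le[of H] aa_nonneg[of M k H] by simp
    qed
  qed simp

  define d where "d = - 1 / (ln 2 * u0 * (u0 + 1))"
  define c0 where "c0 = log 2 (1 + 1 / u0)"
  have d_neg: "d \<le> 0" unfolding d_def using u0pos by (simp add: divide_nonpos_pos)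
  have AE_tan: "AE H in H_dist M K. c0 + d * (u H - u0) \<le> F H"
    using AEpos
  proof (rule eventually_mono)
    fix H assume a: "aa M k H > 0"
    have X0: "X H > 0" unfolding X_def using bk a by simp
    have n0: "\<rho> * S H + 1 > 0" using rho S_nonneg[of H] by (simp add: add_nonneg_pos)
    have up: "u H > 0" unfolding u_def using X0 rho n0 by (intro divide_pos_pos mult_pos_pos) auto
    have "1 / u H = \<rho> * X H / (\<rho> * S H + 1)" unfolding u_def by simp
    then have "F H = log 2 (1 + 1 / u H)" unfolding F_def by simp
    then show "c0 + d * (u H - u0) \<le> F H"
      using tangent_log[OF up u0pos] unfolding c0_def d_def by simp
  qed
  have int_lin: "integrable (H_dist M K) (\<lambda>H. c0 + d * (u H - u0))"
    using int_u by auto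
  have "(\<integral>H. c0 + d * (u H - u0) \<partial>H_dist M K) \<le> (\<integral>H. F H \<partial>H_dist M K)"
    by (rule integral_mono_AE[OF int_lin int_F AE_tan])
  moreover have "(\<integral>H. c0 + d * (u H - u0) \<partial>H_dist M K) = c0 + d * ((\<integral>H. u H \<partial>H_dist M K) - u0)"
    using int_u by (simp add: algebra_simps P.prob_space)
  moreover have "d * ((\<integral>H. u H \<partial>H_dist M K) - u0) \<ge> 0"
    using d_neg Eu by (intro mult_nonpos_nonpos) auto
  ultimately have main: "c0 \<le> R_dl M K Pr \<beta> k t" unfolding R_eq by linarith

  have "1 / u0 = Pr * (real M - 1) * (real M - 2) * (\<beta> k)\<^sup>2 /
      (Pr * (real M - 2) * \<beta> k * (\<Sum>i\<in>interf K k t. \<beta> i) + real M * (\<Sum>i\<in>{1..K}. \<beta> i))"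
  proof -
    have m1: "real M - 1 > 0" "real M - 2 > 0" using M3 by auto
    have "u0 = (\<Sum>i\<in>T. \<beta> i) / (\<beta> k * (real M - 1)) + real M * Sb / (Pr * (\<beta> k)\<^sup>2 * ((real M - 1) * (real M - 2)))"
      unfolding u0_def \<rho>_def by (simp add: sum_divide_distrib)
    also have "\<dots> = (Pr * (real M - 2) * \<beta> k * (\<Sum>i\<in>T. \<beta> i) + real M * Sb) / (Pr * (real M - 1) * (real M - 2) * (\<beta> k)\<^sup>2)"
    proof -
      have g: "\<And>a b p q x y::real. a > 0 \<Longrightarrow> b > 0 \<Longrightarrow> p > 0 \<Longrightarrow> q > 0 \<Longrightarrow>
          x / (q * a) + y / (p * q\<^sup>2 * (a * b)) = (p * b * q * x + y) / (p * a * b * q\<^sup>2)"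
        by (simp add: field_simps power2_eq_square)
      show ?thesis using g[OF m1 Prp bk, of "\<Sum>i\<in>T. \<beta> i" "real M * Sb"] by simp
    qed
    finally show ?thesis unfolding T_def Sb_def by simp
  qed
  then show ?thesis using main unfolding c0_def by simp
qed

end
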